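(* Let $\Phi,\Psi$ be Young functions satisfying $\Delta_2$ such that $\Phi\in\Delta'$ and $\tilde\Psi\in\Delta'$. Then there exists $C=C(\Phi,\Psi)>0$ such that \[ \Psi\circ\Phi^{-1}(s)\,\Psi\circ\Phi^{-1}(t)\le C\,\Psi\circ\Phi^{-1}(st)\qquad\forall\,s,t\ge0. \]
   Context: A Young function is $\Phi(t)=\int_0^t\varphi(s)\,ds$ with $\varphi$ increasing, right continuous, $\varphi(t)=0$ iff $t=0$; $\tilde\Psi(t)=\sup_{s>0}\{st-\Psi(s)\}$ is the complementary function. $\Delta_2$: $\Phi(2t)\le C\Phi(t)$ for all $t\ge0$; $\Delta'$: $\Phi(st)\le C\Phi(s)\Phi(t)$ for all $s,t\ge0$ (some $C>1$). *)

theory Defs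
  imports "HOL-Analysis.Analysis"
begin

definition young_function :: "(real \<Rightarrow> real) \<Rightarrow> bool" where
  "young_function \<Phi> \<longleftrightarrow> (\<exists>\<phi>::real \<Rightarrow> real.
      mono_on {0..} \<phi> \<and>
      (\<forall>t\<ge>0. continuous (at_right t) \<phi>) \<and>
      (\<forall>t\<ge>0. \<phi> t = 0 \<longleftrightarrow> t = 0) \<and>
      (\<forall>t\<ge>0. \<Phi> t = integral {0..t} \<phi>))"

definition young_conj :: "(real \<Rightarrow> real) \<Rightarrow> real \<Rightarrow> real" where
  "young_conj \<Psi> t = Sup {s * t - \<Psi> s | s. s > 0}"

definition young_conj_finite :: "(real \<Rightarrow> real) \<Rightarrow> bool" where
  "young_conj_finite \<Psi> \<longleftrightarrow> (\<forall>t\<ge>0. bdd_above {s * t - \<Psi> s | s. s > 0})"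

definition Delta2 :: "(real \<Rightarrow> real) \<Rightarrow> bool" where
  "Delta2 \<Phi> \<longleftrightarrow> (\<exists>C. \<forall>t\<ge>0. \<Phi> (2 * t) \<le> C * \<Phi> t)"

definition Delta' :: "(real \<Rightarrow> real) \<Rightarrow> bool" where
  "Delta' \<Phi> \<longleftrightarrow> (\<exists>C>1. \<forall>s\<ge>0. \<forall>t\<ge>0. \<Phi> (s * t) \<le> C * \<Phi> s * \<Phi> t)"

definition young_inv :: "(real \<Rightarrow> real) \<Rightarrow> real \<Rightarrow> real" where
  "young_inv \<Phi> = the_inv_into {0..} \<Phi>"

end

theory Submission
  imports Defs
begin

lemma young_basic:
  assumes "young_function \<Phi>"
  obtains \<phi> where "mono_on {0..} \<phi>" "\<And>t. t \<ge> 0 \<Longrightarrow> \<phi> t = 0 \<longleftrightarrow> t = 0"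
    "\<And>a b. 0 \<le> a \<Longrightarrow> a \<le> b \<Longrightarrow> (b-a) * \<phi> a \<le> \<Phi> b - \<Phi> a"
    "\<And>a b. 0 \<le> a \<Longrightarrow> a \<le> b \<Longrightarrow> \<Phi> b - \<Phi> a \<le> (b-a) * \<phi> b"
    "\<Phi> 0 = 0"
proof -
  from assms obtain \<phi> where m: "mono_on {0..} \<phi>" and z: "\<forall>t\<ge>0. \<phi> t = 0 \<longleftrightarrow> t = 0"
    and I: "\<forall>t\<ge>0. \<Phi> t = integral {0..t} \<phi>" unfolding young_function_def by blast
  have int: "\<phi> integrable_on {a..b}" if "0 \<le> a" for a b
    by (rule integrable_on_mono_on) (use m that in \<open>auto intro: mono_on_subset\<close>)
  have diff: "\<Phi> b - \<Phi> a = integral {a..b} \<phi>" if "0 \<le> a" "a \<le> b" for a b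
    using Henstock_Kurzweil_Integration.integral_combine[OF that(1) that(2) int[of 0 b, simplified]] I that by auto
  show ?thesis
  proof
    show "mono_on {0..} \<phi>" by fact
    show "\<And>t. t \<ge> 0 \<Longrightarrow> \<phi> t = 0 \<longleftrightarrow> t = 0" using z by auto
    show "\<Phi> 0 = 0" using I by auto
    fix a b :: real assume ab: "0 \<le> a" "a \<le> b"
    have "integral {a..b} (\<lambda>_. \<phi> a) \<le> integral {a..b} \<phi>"
      by (rule integral_le) (use ab m int in \<open>auto intro: mono_onD\<close>)
    then show "(b-a) * \<phi> a \<le> \<Phi> b - \<Phi> a" using diff[OF ab] ab by simp
    have "integral {a..b} \<phi> \<le> integral {a..b} (\<lambda>_. \<phi> b)"
      by (rule integral_le) (use ab m int in \<open>auto intro: mono_onD\<close>)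
    then show "\<Phi> b - \<Phi> a \<le> (b-a) * \<phi> b" using diff[OF ab] ab by simp
  qed
qed

lemma young_props:
  assumes "young_function F"
  shows "F 0 = 0" "\<And>x. x \<ge> 0 \<Longrightarrow> F x \<ge> 0"
    "\<And>a b. 0 \<le> a \<Longrightarrow> a < b \<Longrightarrow> F a < F b"
    "\<And>a b. 0 \<le> a \<Longrightarrow> a \<le> b \<Longrightarrow> F a \<le> F b"
    "\<And>K x. K \<ge> 1 \<Longrightarrow> x \<ge> 0 \<Longrightarrow> K * F x \<le> F (K * x)"
    "\<And>y. y \<ge> 0 \<Longrightarrow> young_inv F y \<ge> 0 \<and> F (young_inv F y) = y"
proof -
  obtain f where m: "mono_on {0..} f" and z: "\<And>t. t \<ge> 0 \<Longrightarrow> f t = 0 \<longleftrightarrow> t = 0"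
    and lo: "\<And>a b. 0 \<le> a \<Longrightarrow> a \<le> b \<Longrightarrow> (b-a) * f a \<le> F b - F a"
    and up: "\<And>a b. 0 \<le> a \<Longrightarrow> a \<le> b \<Longrightarrow> F b - F a \<le> (b-a) * f b"
    and F0: "F 0 = 0"
    using young_basic[OF assms] by blast
  have fnn: "f t \<ge> 0" if "t \<ge> 0" for t
    using mono_onD[OF m, of 0 t] z[of 0] that by auto
  have fpos: "f t > 0" if "t > 0" for t
    using fnn[of t] z[of t] that by auto
  show "F 0 = 0" by fact
  show mono: "F a \<le> F b" if "0 \<le> a" "a \<le> b" for a b
    using lo[OF that] fnn[of a] that by (smt (verit) mult_nonneg_nonneg)
  show nn: "F x \<ge> 0" if "x \<ge> 0" for x using mono[of 0 x] that F0 by simp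
  show strict: "F a < F b" if "0 \<le> a" "a < b" for a b
  proof -
    define c where "c = (a+b)/2"
    have "(b-c) * f c \<le> F b - F c" using lo[of c b] that unfolding c_def by simp
    moreover have "(b-c) * f c > 0" using fpos[of c] that unfolding c_def by simp
    moreover have "F a \<le> F c" using mono[of a c] that unfolding c_def by simp
    ultimately show ?thesis by simp
  qed
  show "K * F x \<le> F (K * x)" if "K \<ge> 1" "x \<ge> 0" for K x
  proof -
    have "(K*x - x) * f x \<le> F (K*x) - F x" using lo[of x "K*x"] that mult_right_mono[of 1 K x] by simp
    moreover have "F x \<le> x * f x" using up[of 0 x] that F0 by simp
    moreover have "(K*x - x) * f x = (K-1) * (x * f x)" by (simp add: algebra_simps)
    moreover have "(K-1) * F x \<le> (K-1) * (x * f x)"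
      using \<open>F x \<le> x * f x\<close> that by (intro mult_left_mono) auto
    ultimately show ?thesis by (simp add: algebra_simps)
  qed
  have inj: "inj_on F {0..}"
    by (rule linorder_inj_onI) (use strict in fastforce)+
  show "young_inv F y \<ge> 0 \<and> F (young_inv F y) = y" if y0: "y \<ge> 0" for y
  proof -
    define M where "M = 1 + y / f 1"
    have f1: "f 1 > 0" using fpos by simp
    have M1: "M \<ge> 1" using M_def f1 that by simp
    have "(M - 1) * f 1 \<le> F M - F 1" using lo[of 1 M] M1 by simp
    moreover have "(M - 1) * f 1 = y" using M_def f1 by simp
    moreover have "F 1 \<ge> 0" using nn by simp
    ultimately have yM: "y \<le> F M" by simp
    have cont: "continuous_on {0..M} F"
      unfolding continuous_on_iff
    proof (intro ballI allI impI)
      fix x e :: real assume x: "x \<in> {0..M}" and e: "0 < e"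
      define d where "d = e / (f M + 1)"
      have fM: "f M \<ge> 0" using fnn M1 by simp
      have d: "d > 0" using d_def e fM by simp
      have "\<forall>x'\<in>{0..M}. dist x' x < d \<longrightarrow> dist (F x') (F x) < e"
      proof (intro ballI impI)
        fix x' assume x': "x' \<in> {0..M}" and dx: "dist x' x < d"
        have key: "\<bar>F p - F q\<bar> \<le> (p - q) * f M" if "0 \<le> q" "q \<le> p" "p \<le> M" for p q
        proof -
          have "F p - F q \<le> (p-q) * f p" using up that by simp
          also have "\<dots> \<le> (p-q) * f M" using mono_onD[OF m, of p M] that
            by (intro mult_left_mono) auto
          finally show ?thesis using mono[of q p] that by simp
        qed
        have "\<bar>F x' - F x\<bar> \<le> \<bar>x' - x\<bar> * f M"
        proof (cases "x \<le> x'")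
          case True then show ?thesis using key[of x x'] x x' by simp
        next
          case False then show ?thesis using key[of x' x] x x' by (simp add: abs_minus_commute)
        qed
        also have "\<dots> \<le> d * f M" using dx fM by (intro mult_right_mono) (auto simp: dist_real_def)
        also have "\<dots> < e" using d_def e fM d by (simp add: field_simps)
        finally show "dist (F x') (F x) < e" by (simp add: dist_real_def)
      qed
      then show "\<exists>d>0. \<forall>x'\<in>{0..M}. dist x' x < d \<longrightarrow> dist (F x') (F x) < e" using d by blast
    qed
    obtain x where x: "0 \<le> x" "x \<le> M" "F x = y"
      using IVT'[of F 0 y M] F0 y0 yM M1 cont by auto
    have "y \<in> F ` {0..}" using x by auto
    then show ?thesis unfolding young_inv_def
      using f_the_inv_into_f[OF inj] the_inv_into_into[OF inj, of y "{0..}"] by auto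
  qed
qed

lemma nabla_prime:
  assumes Y: "young_function \<Psi>" and fin: "young_conj_finite \<Psi>"
    and D: "Delta' (young_conj \<Psi>)"
  obtains K where "K > 0" "\<And>a b. a \<ge> 0 \<Longrightarrow> b \<ge> 0 \<Longrightarrow> \<Psi> a * \<Psi> b \<le> \<Psi> (K * a * b)"
proof -
  obtain f where m: "mono_on {0..} f" and z: "\<And>t. t \<ge> 0 \<Longrightarrow> f t = 0 \<longleftrightarrow> t = 0"
    and lo: "\<And>a b. 0 \<le> a \<Longrightarrow> a \<le> b \<Longrightarrow> (b-a) * f a \<le> \<Psi> b - \<Psi> a"
    and up: "\<And>a b. 0 \<le> a \<Longrightarrow> a \<le> b \<Longrightarrow> \<Psi> b - \<Psi> a \<le> (b-a) * f b"
    and F0: "\<Psi> 0 = 0"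
    using young_basic[OF Y] by blast
  note P = young_props[OF Y]
  obtain C where C: "C > 1" "\<And>s t. s \<ge> 0 \<Longrightarrow> t \<ge> 0 \<Longrightarrow>
      young_conj \<Psi> (s * t) \<le> C * young_conj \<Psi> s * young_conj \<Psi> t"
    using D unfolding Delta'_def by blast
  have fnn: "f t \<ge> 0" if "t \<ge> 0" for t
    using mono_onD[OF m, of 0 t] z[of 0] that by auto
  let ?S = "\<lambda>t. {s * t - \<Psi> s | s. s > 0}"
  have young: "s * t \<le> \<Psi> s + young_conj \<Psi> t" if "s > 0" "t \<ge> 0" for s t
  proof -
    have "s * t - \<Psi> s \<in> ?S t" using that by blast
    then have "s * t - \<Psi> s \<le> Sup (?S t)"
      using fin that unfolding young_conj_finite_def by (intro cSup_upper) auto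
    then show ?thesis unfolding young_conj_def by simp
  qed
  have conj_up: "young_conj \<Psi> (f a) \<le> a * f a" if "a \<ge> 0" for a
    unfolding young_conj_def
  proof (rule cSup_least)
    show "?S (f a) \<noteq> {}" using zero_less_one by blast
    fix x assume "x \<in> ?S (f a)"
    then obtain s where s: "s > 0" "x = s * f a - \<Psi> s" by blast
    show "x \<le> a * f a"
    proof (cases "s \<le> a")
      case True
      then have "s * f a \<le> a * f a" using fnn[OF that] by (intro mult_right_mono) auto
      then show ?thesis using s P(2)[of s] by simp
    next
      case False
      then have "(s - a) * f a \<le> \<Psi> s - \<Psi> a" using lo[of a s] that by simp
      then show ?thesis using s P(2)[of a] that by (simp add: algebra_simps)
    qed
  qed
  have conj_nn: "young_conj \<Psi> (f a) \<ge> 0" if "a > 0" for a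
  proof -
    have "(a/2) * f a \<le> \<Psi> (a/2) + young_conj \<Psi> (f a)"
      using young[of "a/2" "f a"] that fnn[of a] by simp
    moreover have "\<Psi> (a/2) \<le> (a/2) * f (a/2)" using up[of 0 "a/2"] that F0 by simp
    moreover have "(a/2) * f (a/2) \<le> (a/2) * f a"
      using mono_onD[OF m, of "a/2" a] that by (intro mult_left_mono) auto
    ultimately show ?thesis by simp
  qed
  show ?thesis
  proof
    show "C + 1 > 0" using C by simp
    fix a b :: real assume a: "a \<ge> 0" and b: "b \<ge> 0"
    show "\<Psi> a * \<Psi> b \<le> \<Psi> ((C + 1) * a * b)"
    proof (cases "a = 0 \<or> b = 0")
      case True then show ?thesis using F0 P(2)[of 0] by auto
    next
      case False
      then have a0: "a > 0" and b0: "b > 0" using a b by auto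
      define u where "u = f a"
      define v where "v = f b"
      have u0: "u \<ge> 0" and v0: "v \<ge> 0" using fnn a b u_def v_def by auto
      have "(C+1) * a * b * (u * v) \<le> \<Psi> ((C+1) * a * b) + young_conj \<Psi> (u * v)"
        using young[of "(C + 1) * a * b" "u * v"] a0 b0 C u0 v0 by simp
      also have "young_conj \<Psi> (u * v) \<le> C * young_conj \<Psi> u * young_conj \<Psi> v"
        using C(2) u0 v0 by simp
      also have "C * young_conj \<Psi> u * young_conj \<Psi> v \<le> C * (a * u) * (b * v)"
      proof -
        have "young_conj \<Psi> u * young_conj \<Psi> v \<le> (a * u) * (b * v)"
          using conj_up[OF a] conj_up[OF b] conj_nn[OF a0] conj_nn[OF b0] u_def v_def
          by (intro mult_mono) (auto intro: order_trans)
        then show ?thesis using C by (simp add: mult.assoc)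
      qed
      finally have "a * b * (u * v) \<le> \<Psi> ((C+1) * a * b)" by (simp add: algebra_simps)
      moreover have "\<Psi> a * \<Psi> b \<le> (a * u) * (b * v)"
        using up[of 0 a] up[of 0 b] a b F0 u_def v_def P(2)[OF a] P(2)[OF b] by (intro mult_mono) auto
      ultimately show ?thesis by (simp add: algebra_simps)
    qed
  qed
qed

lemma delta2_iter:
  assumes Y: "young_function \<Psi>" and D: "Delta2 \<Psi>"
  obtains B where "B \<ge> 1" "\<And>n y. y \<ge> 0 \<Longrightarrow> \<Psi> (2^n * y) \<le> B^n * \<Psi> y"
proof -
  note P = young_props[OF Y]
  obtain C where C: "\<And>t. t \<ge> 0 \<Longrightarrow> \<Psi> (2*t) \<le> C * \<Psi> t" using D unfolding Delta2_def by blast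
  define B where "B = max C 1"
  have B: "\<Psi> (2*t) \<le> B * \<Psi> t" if "t \<ge> 0" for t
    using C[OF that] P(2)[OF that] B_def by (smt (verit) mult_right_mono)
  have "\<Psi> (2^n * y) \<le> B^n * \<Psi> y" if "y \<ge> 0" for n y
  proof (induction n)
    case 0 then show ?case by simp
  next
    case (Suc n)
    have "\<Psi> (2^Suc n * y) = \<Psi> (2 * (2^n * y))" by (simp add: mult.assoc)
    also have "\<dots> \<le> B * \<Psi> (2^n * y)" using B that by simp
    also have "\<dots> \<le> B * (B^n * \<Psi> y)" using Suc B_def by (intro mult_left_mono) auto
    finally show ?case by (simp add: mult.assoc)
  qed
  moreover have "B \<ge> 1" using B_def by simp
  ultimately show ?thesis using that by blast
qed

theorem lemma3p6:
  fixes \<Phi> \<Psi> :: "real \<Rightarrow> real"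
  assumes "young_function \<Phi>" and "young_function \<Psi>"
    and "Delta2 \<Phi>" and "Delta2 \<Psi>"
    and "Delta' \<Phi>"
    and "young_conj_finite \<Psi>" and "Delta' (young_conj \<Psi>)"
  shows "\<exists>C>0. \<forall>s\<ge>0. \<forall>t\<ge>0.
           \<Psi> (young_inv \<Phi> s) * \<Psi> (young_inv \<Phi> t) \<le> C * \<Psi> (young_inv \<Phi> (s * t))"
proof -
  note P = young_props[OF assms(1)]
  note Q = young_props[OF assms(2)]
  obtain C1 where C1: "C1 > 1" "\<And>s t. s \<ge> 0 \<Longrightarrow> t \<ge> 0 \<Longrightarrow> \<Phi> (s * t) \<le> C1 * \<Phi> s * \<Phi> t"
    using assms(5) unfolding Delta'_def by blast
  obtain K where K: "K > 0" "\<And>a b. a \<ge> 0 \<Longrightarrow> b \<ge> 0 \<Longrightarrow> \<Psi> a * \<Psi> b \<le> \<Psi> (K * a * b)"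
    using nabla_prime[OF assms(2) assms(6) assms(7)] by blast
  obtain B where B: "B \<ge> 1" "\<And>n y. y \<ge> 0 \<Longrightarrow> \<Psi> (2^n * y) \<le> B^n * \<Psi> y"
    using delta2_iter[OF assms(2) assms(4)] by blast
  obtain n where n: "K * C1 < (2::real)^n" using real_arch_pow[of 2 "K * C1"] by auto
  show ?thesis
  proof (intro exI[of _ "B^n"] conjI allI impI)
    show "B^n > 0" using B by simp
    fix s t :: real assume s: "s \<ge> 0" and t: "t \<ge> 0"
    define a where "a = young_inv \<Phi> s"
    define b where "b = young_inv \<Phi> t"
    define w where "w = young_inv \<Phi> (s * t)"
    have a: "a \<ge> 0" "\<Phi> a = s" using P(6)[OF s] a_def by auto
    have b: "b \<ge> 0" "\<Phi> b = t" using P(6)[OF t] b_def by auto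
    have w: "w \<ge> 0" "\<Phi> w = s * t" using P(6)[of "s*t"] s t w_def by auto
    have "\<Phi> (a * b) \<le> C1 * \<Phi> w" using C1(2)[OF a(1) b(1)] a b w by simp
    also have "\<dots> \<le> \<Phi> (C1 * w)" using P(5)[of C1 w] C1 w by simp
    finally have ab: "a * b \<le> C1 * w"
      using P(3)[of "C1 * w" "a * b"] C1 w by (smt (verit) mult_nonneg_nonneg)
    have "\<Psi> a * \<Psi> b \<le> \<Psi> (K * a * b)" using K a b by simp
    also have "\<dots> \<le> \<Psi> (K * C1 * w)"
      using Q(4)[of "K * a * b" "K * C1 * w"] ab K a b mult_left_mono[OF ab, of K]
      by (simp add: mult.assoc)
    also have "\<dots> \<le> \<Psi> (2^n * w)"
      using Q(4)[of "K * C1 * w" "2^n * w"] n w K C1 mult_right_mono[of "K * C1" "2^n" w]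
      by simp
    also have "\<dots> \<le> B^n * \<Psi> w" using B w by simp
    finally show "\<Psi> (young_inv \<Phi> s) * \<Psi> (young_inv \<Phi> t) \<le> B^n * \<Psi> (young_inv \<Phi> (s * t))"
      using a_def b_def w_def by simp
  qed
qed

end
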